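(* Let $y\in\{1,\dots,C\}^N$ be node labels with exactly $K=N/C$ nodes in each class, and let $\mathcal G_r=(\mathcal V,\mathcal E_r)$, $r=1,\dots,R$, be independent random undirected graphs on the common node set $\mathcal V=\{1,\dots,N\}$, with $\mathcal N_r(i)=\{j:(i,j)\in\mathcal E_r\}$. Assume that in each graph $\mathcal G_r$ the events $\{(i,j)\in\mathcal E_r\}$ are independent across unordered node pairs $\{i,j\}$, and that $\mathbb P[(i,j)\in\mathcal E_r]\le q$ whenever $y_i\neq y_j$. Then $$\mathbb P\Big[\bigcap_{i=1}^N\bigcup_{r=1}^R\{y_j=y_i\ \text{for all } j\in\mathcal N_r(i)\}\Big]\ \ge\ \Big(1-\Big(1-(1-q)^{\frac{N(C-1)}{C}}\Big)^R\Big)^N.$$ *)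

theory Defs
  imports "HOL-Probability.Probability"
begin

definition nbrs :: "(nat \<times> nat) set \<Rightarrow> nat \<Rightarrow> nat set" where
  "nbrs E i = {j. (i, j) \<in> E}"

end

theory Submission
  imports Defs
begin
definition wt :: "'x set \<Rightarrow> ('x \<Rightarrow> real) \<Rightarrow> 'x set \<Rightarrow> real" where
  "wt X p S = (\<Prod>x\<in>X. if x \<in> S then p x else 1 - p x)"
definition mu :: "'x set \<Rightarrow> ('x \<Rightarrow> real) \<Rightarrow> 'x set set \<Rightarrow> real" where
  "mu X p A = (\<Sum>S\<in>Pow X \<inter> A. wt X p S)"
definition downc :: "'x set set \<Rightarrow> bool" where
  "downc A \<longleftrightarrow> (\<forall>S T. S \<in> A \<longrightarrow> T \<subseteq> S \<longrightarrow> T \<in> A)"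

lemma wt_nonneg: "\<forall>x\<in>X. 0 \<le> p x \<and> p x \<le> 1 \<Longrightarrow> 0 \<le> wt X p S"
  unfolding wt_def by (intro prod_nonneg) auto

lemma mu_nonneg: "\<forall>x\<in>X. 0 \<le> p x \<and> p x \<le> 1 \<Longrightarrow> 0 \<le> mu X p A"
  unfolding mu_def by (intro sum_nonneg wt_nonneg)

lemma mu_mono: "finite X \<Longrightarrow> \<forall>x\<in>X. 0 \<le> p x \<and> p x \<le> 1 \<Longrightarrow> A \<subseteq> B \<Longrightarrow> mu X p A \<le> mu X p B"
  unfolding mu_def by (intro sum_mono2 wt_nonneg) auto

lemma mu_insert:
  assumes "finite X" "a \<notin> X"
  shows "mu (insert a X) p A = (1 - p a) * mu X p A + p a * mu X p {S. insert a S \<in> A}"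
proof -
  have split: "Pow (insert a X) \<inter> A = (Pow X \<inter> A) \<union> insert a ` (Pow X \<inter> {S. insert a S \<in> A})"
    by (auto simp: Pow_insert)
  have disj: "(Pow X \<inter> A) \<inter> insert a ` (Pow X \<inter> {S. insert a S \<in> A}) = {}"
    using assms by auto
  have inj: "inj_on (insert a) (Pow X \<inter> {S. insert a S \<in> A})"
    using assms(2) unfolding inj_on_def by (auto simp: insert_ident)
  have w1: "wt (insert a X) p S = (1 - p a) * wt X p S" if "S \<subseteq> X" for S
  proof -
    have "a \<notin> S" using that assms by auto
    then show ?thesis unfolding wt_def using assms by (simp add: prod.insert)
  qed
  have w2: "wt (insert a X) p (insert a S) = p a * wt X p S" if "S \<subseteq> X" for S
  proof -
    have "wt X p (insert a S) = wt X p S" unfolding wt_def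
      using assms by (intro prod.cong) auto
    then show ?thesis unfolding wt_def using assms by (simp add: prod.insert)
  qed
  have "mu (insert a X) p A = (\<Sum>S\<in>Pow X \<inter> A. wt (insert a X) p S)
      + (\<Sum>S\<in>insert a ` (Pow X \<inter> {S. insert a S \<in> A}). wt (insert a X) p S)"
    unfolding mu_def split using assms disj by (intro sum.union_disjoint) auto
  also have "(\<Sum>S\<in>Pow X \<inter> A. wt (insert a X) p S) = (1 - p a) * mu X p A"
    unfolding mu_def sum_distrib_left by (intro sum.cong) (auto simp: w1)
  also have "(\<Sum>S\<in>insert a ` (Pow X \<inter> {S. insert a S \<in> A}). wt (insert a X) p S)
       = (\<Sum>S\<in>Pow X \<inter> {S. insert a S \<in> A}. wt (insert a X) p (insert a S))"
    using inj by (simp add: sum.reindex)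
  also have "\<dots> = p a * mu X p {S. insert a S \<in> A}"
    unfolding mu_def sum_distrib_left by (intro sum.cong) (auto simp: w2)
  finally show ?thesis .
qed

lemma harris_aux:
  fixes p a0 a1 b0 b1 :: real
  assumes "0 \<le> p" "p \<le> 1" "a1 \<le> a0" "b1 \<le> b0"
  shows "((1 - p) * a0 + p * a1) * ((1 - p) * b0 + p * b1) \<le> (1 - p) * (a0 * b0) + p * (a1 * b1)"
proof -
  have "(1 - p) * (a0 * b0) + p * (a1 * b1) - ((1 - p) * a0 + p * a1) * ((1 - p) * b0 + p * b1)
     = p * (1 - p) * ((a0 - a1) * (b0 - b1))" by (simp add: algebra_simps)
  moreover have "0 \<le> p * (1 - p) * ((a0 - a1) * (b0 - b1))"
    using assms by (intro mult_nonneg_nonneg) auto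
  ultimately show ?thesis by linarith
qed

lemma downc_shift:
  assumes "downc A" shows "downc {S. insert a S \<in> A}"
  unfolding downc_def
proof (intro allI impI)
  fix S T assume "S \<in> {S. insert a S \<in> A}" "T \<subseteq> S"
  then have "insert a T \<subseteq> insert a S" "insert a S \<in> A" by auto
  with assms show "T \<in> {S. insert a S \<in> A}" unfolding downc_def by blast
qed

lemma harris:
  assumes "finite X" "\<forall>x\<in>X. 0 \<le> p x \<and> p x \<le> 1"
  shows "downc A \<Longrightarrow> downc B \<Longrightarrow> mu X p A * mu X p B \<le> mu X p (A \<inter> B)"
  using assms
proof (induction X arbitrary: A B rule: finite_induct)
  case empty
  then show ?case by (simp add: mu_def wt_def Pow_empty Int_insert_left)
next
  case (insert a X)
  define A1 where "A1 = {S. insert a S \<in> A}"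
  define B1 where "B1 = {S. insert a S \<in> B}"
  have dA1: "downc A1" using insert.prems(1) unfolding A1_def by (rule downc_shift)
  have dB1: "downc B1" using insert.prems(2) unfolding B1_def by (rule downc_shift)
  have pX: "\<forall>x\<in>X. 0 \<le> p x \<and> p x \<le> 1" using insert.prems by auto
  have pa: "0 \<le> p a" "p a \<le> 1" using insert.prems by auto
  have sA: "A1 \<subseteq> A" using insert.prems unfolding downc_def A1_def by blast
  have sB: "B1 \<subseteq> B" using insert.prems unfolding downc_def B1_def by blast
  have AB1: "{S. insert a S \<in> A \<and> insert a S \<in> B} = A1 \<inter> B1" by (auto simp: A1_def B1_def)
  have "mu (insert a X) p A * mu (insert a X) p B =
     ((1 - p a) * mu X p A + p a * mu X p A1) * ((1 - p a) * mu X p B + p a * mu X p B1)"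
    using insert by (simp add: mu_insert A1_def B1_def)
  also have "\<dots> \<le> (1 - p a) * (mu X p A * mu X p B) + p a * (mu X p A1 * mu X p B1)"
    by (intro harris_aux pa mu_mono insert sA sB pX)
  also have "\<dots> \<le> (1 - p a) * mu X p (A \<inter> B) + p a * mu X p (A1 \<inter> B1)"
    using pa insert.IH[OF insert.prems(1,2) pX] insert.IH[OF dA1 dB1 pX]
    by (intro add_mono mult_left_mono) auto
  also have "\<dots> = mu (insert a X) p (A \<inter> B)"
    using insert by (simp add: mu_insert AB1)
  finally show ?case .
qed

lemma mu_UNIV: "finite X \<Longrightarrow> mu X p UNIV = 1"
proof (induction X rule: finite_induct)
  case empty
  then show ?case by (simp add: mu_def wt_def Pow_empty)
next
  case (insert a X)
  then show ?case by (simp add: mu_insert)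
qed

lemma harris_prod:
  assumes "finite X" "\<forall>x\<in>X. 0 \<le> p x \<and> p x \<le> 1" "finite I" "\<forall>i\<in>I. downc (U i)"
  shows "(\<Prod>i\<in>I. mu X p (U i)) \<le> mu X p (\<Inter>i\<in>I. U i)"
  using assms(3,4)
proof (induction I rule: finite_induct)
  case empty
  then show ?case using assms(1) by (simp add: mu_UNIV)
next
  case (insert i I)
  have d: "downc (\<Inter>i\<in>I. U i)" using insert.prems unfolding downc_def by blast
  have "(\<Prod>i\<in>insert i I. mu X p (U i)) = mu X p (U i) * (\<Prod>i\<in>I. mu X p (U i))"
    using insert by simp
  also have "\<dots> \<le> mu X p (U i) * mu X p (\<Inter>i\<in>I. U i)"
    using insert assms by (intro mult_left_mono mu_nonneg) auto
  also have "\<dots> \<le> mu X p (U i \<inter> (\<Inter>i\<in>I. U i))"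
    using insert.prems d assms by (intro harris) auto
  finally show ?case by simp
qed

context prob_space
begin

lemma indep_events_pattern:
  assumes ind: "indep_events E I" and J: "finite J" "J \<subseteq> I"
  shows "prob {\<omega>\<in>space M. \<forall>x\<in>J. (\<omega> \<in> E x) = b x}
       = (\<Prod>x\<in>J. if b x then prob (E x) else 1 - prob (E x))"
proof (cases "J = {}")
  case True
  then show ?thesis by (simp add: prob_space)
next
  case False
  have ev: "\<And>x. x \<in> I \<Longrightarrow> E x \<in> events" using ind by (auto simp: indep_events_def)
  have is1: "indep_sets (\<lambda>i. {E i}) I" using ind by (simp add: indep_events_def_alt)
  have is2: "indep_sets (\<lambda>i. sigma_sets (space M) {E i}) I"
    by (rule indep_sets_sigma[OF is1]) (auto simp: Int_stable_def)
  define F where "F x = (if b x then E x else space M - E x)" for x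
  have Fin: "\<forall>x\<in>J. F x \<in> sigma_sets (space M) {E x}"
    unfolding F_def by (auto intro: sigma_sets.Compl sigma_sets.Basic)
  have Fsp: "\<forall>x\<in>J. F x \<subseteq> space M"
  proof
    fix x assume "x \<in> J"
    then have "E x \<in> events" using J ev by auto
    then have "E x \<subseteq> space M" by (rule sets.sets_into_space)
    then show "F x \<subseteq> space M" unfolding F_def by auto
  qed
  obtain x0 where x0: "x0 \<in> J" using False by auto
  have eq: "{\<omega>\<in>space M. \<forall>x\<in>J. (\<omega> \<in> E x) = b x} = (\<Inter>x\<in>J. F x)"
  proof (intro set_eqI iffI)
    fix \<omega> assume "\<omega> \<in> {\<omega>\<in>space M. \<forall>x\<in>J. (\<omega> \<in> E x) = b x}"
    then show "\<omega> \<in> (\<Inter>x\<in>J. F x)" unfolding F_def by auto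
  next
    fix \<omega> assume h: "\<omega> \<in> (\<Inter>x\<in>J. F x)"
    then have sp: "\<omega> \<in> space M" using Fsp x0 by blast
    have "(\<omega> \<in> E x) = b x" if "x \<in> J" for x
      using h that unfolding F_def by (cases "b x") auto
    with sp show "\<omega> \<in> {\<omega>\<in>space M. \<forall>x\<in>J. (\<omega> \<in> E x) = b x}" by auto
  qed
  have "prob (\<Inter>x\<in>J. F x) = (\<Prod>x\<in>J. prob (F x))"
    by (rule indep_setsD[OF is2 J(2) False J(1) Fin])
  also have "\<dots> = (\<Prod>x\<in>J. if b x then prob (E x) else 1 - prob (E x))"
    using J ev by (intro prod.cong) (auto simp: F_def prob_compl)
  finally show ?thesis using eq by simp
qed

lemma ev_eq_events:
  assumes "E \<in> events" shows "{\<omega>\<in>space M. (\<omega> \<in> E) = c} \<in> events"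
proof (cases c)
  case True
  have "{\<omega>\<in>space M. (\<omega> \<in> E) = c} = space M \<inter> E" using True by auto
  then show ?thesis using assms by auto
next
  case False
  have "{\<omega>\<in>space M. (\<omega> \<in> E) = c} = space M - E" using False by auto
  then show ?thesis using assms by auto
qed

lemma law_mu:
  assumes X: "finite X" and ev: "\<forall>x\<in>X. Ev x \<in> events"
    and pt: "\<forall>S. S \<subseteq> X \<longrightarrow> prob {\<omega>\<in>space M. {x\<in>X. \<omega> \<in> Ev x} = S} = wt X p S"
  shows "prob {\<omega>\<in>space M. {x\<in>X. \<omega> \<in> Ev x} \<in> A} = mu X p A"
proof -
  define Z where "Z \<omega> = {x\<in>X. \<omega> \<in> Ev x}" for \<omega>
  have meas: "{\<omega>\<in>space M. Z \<omega> = S} \<in> events" if "S \<subseteq> X" for S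
  proof -
    have "{\<omega>\<in>space M. Z \<omega> = S} = {\<omega>\<in>space M. \<forall>x\<in>X. (\<omega> \<in> Ev x) = (x \<in> S)}"
      using that unfolding Z_def by auto
    also have "\<dots> \<in> events"
      using X ev by (intro sets.sets_Collect_finite_All ev_eq_events) auto
    finally show ?thesis .
  qed
  have eq: "{\<omega>\<in>space M. Z \<omega> \<in> A} = (\<Union>S\<in>Pow X \<inter> A. {\<omega>\<in>space M. Z \<omega> = S})"
    unfolding Z_def by auto
  have "prob (\<Union>S\<in>Pow X \<inter> A. {\<omega>\<in>space M. Z \<omega> = S}) = (\<Sum>S\<in>Pow X \<inter> A. prob {\<omega>\<in>space M. Z \<omega> = S})"
    using X meas by (intro finite_measure_finite_Union) (auto simp: disjoint_family_on_def)
  also have "\<dots> = mu X p A" unfolding mu_def using pt by (intro sum.cong) (auto simp: Z_def)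
  finally show ?thesis using eq unfolding Z_def by simp
qed

end
theorem proposition2:
  fixes M :: "'a measure"
    and Er :: "nat \<Rightarrow> 'a \<Rightarrow> (nat \<times> nat) set"
    and y :: "nat \<Rightarrow> nat"
    and N C K R :: nat
    and q :: real
  assumes P: "prob_space M"
    and C_pos: "C \<ge> 1"
    and NKC: "N = K * C"
    and labels: "\<forall>i\<in>{1..N}. y i \<in> {1..C}"
    and balanced: "\<forall>c\<in>{1..C}. card {i\<in>{1..N}. y i = c} = K"
    and q_range: "0 \<le> q" "q \<le> 1"
    and graph_rv: "\<forall>r\<in>{1..R}. Er r \<in> measurable M (count_space UNIV)"
    and on_nodes: "\<forall>r\<in>{1..R}. \<forall>\<omega>\<in>space M. Er r \<omega> \<subseteq> {1..N} \<times> {1..N}"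
    and undirected: "\<forall>r\<in>{1..R}. \<forall>\<omega>\<in>space M. \<forall>i j. (i, j) \<in> Er r \<omega> \<longleftrightarrow> (j, i) \<in> Er r \<omega>"
    and graphs_indep: "prob_space.indep_vars M (\<lambda>_. count_space UNIV) Er {1..R}"
    and edges_indep: "\<forall>r\<in>{1..R}. prob_space.indep_events M
         (\<lambda>p. {\<omega>\<in>space M. p \<in> Er r \<omega>}) {(i, j). 1 \<le> i \<and> i < j \<and> j \<le> N}"
    and inter_prob: "\<forall>r\<in>{1..R}. \<forall>i\<in>{1..N}. \<forall>j\<in>{1..N}. y i \<noteq> y j \<longrightarrow>
         measure M {\<omega>\<in>space M. (i, j) \<in> Er r \<omega>} \<le> q"
  shows "measure M {\<omega>\<in>space M. \<forall>i\<in>{1..N}. \<exists>r\<in>{1..R}.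
             \<forall>j\<in>nbrs (Er r \<omega>) i. y j = y i}
         \<ge> (1 - (1 - (1 - q) ^ (N * (C - 1) div C)) ^ R) ^ N"
proof -
  interpret prob_space M by (rule P)
  define Pairs where "Pairs = {(i, j). 1 \<le> i \<and> i < j \<and> j \<le> (N::nat)}"
  define X where "X = {1..R} \<times> Pairs"
  define Ev where "Ev x = {\<omega>\<in>space M. snd x \<in> Er (fst x) \<omega>}" for x :: "nat \<times> nat \<times> nat"
  define p where "p x = prob (Ev x)" for x
  define Z where "Z \<omega> = {x\<in>X. \<omega> \<in> Ev x}" for \<omega>
  define U where "U i = {S. \<exists>r\<in>{1..R}. \<forall>j\<in>{1..N}. y j \<noteq> y i \<longrightarrow> (r, (min i j, max i j)) \<notin> S}" for i
  define bound where "bound = 1 - (1 - (1 - q) ^ (N - K)) ^ R"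
  have NK: "N * (C - 1) div C = N - K"
  proof -
    have h: "N * (C - 1) = (K * (C - 1)) * C" using NKC by simp
    have "N * (C - 1) div C = K * (C - 1)" unfolding h using C_pos by (intro div_mult_self_is_m) simp
    also have "\<dots> = N - K" using NKC by (simp add: algebra_simps diff_mult_distrib2)
    finally show ?thesis .
  qed
  show ?thesis
  proof (cases "R = 0")
    case True
    show ?thesis
    proof (cases "N = 0")
      case True
      then show ?thesis by (simp add: prob_space)
    next
      case False
      then show ?thesis using \<open>R = 0\<close> by (simp add: measure_nonneg zero_power)
    qed
  next
    case Rpos: False
    have finPairs: "finite Pairs"
      by (rule finite_subset[of _ "{1..N} \<times> {1..N}"]) (auto simp: Pairs_def)
    have finX: "finite X" unfolding X_def using finPairs by simp
    have Er_meas: "Er r -` B \<inter> space M \<in> events" if "r \<in> {1..R}" for r B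
      using measurable_sets[OF graph_rv[rule_format, OF that], of B] by simp
    have Ev_alt: "Ev (r, pr) = Er r -` {E. pr \<in> E} \<inter> space M" for r pr
      unfolding Ev_def by auto
    have Ev_ev: "\<forall>x\<in>X. Ev x \<in> events"
    proof
      fix x assume "x \<in> X"
      then obtain r pr where x: "x = (r, pr)" "r \<in> {1..R}" unfolding X_def by auto
      show "Ev x \<in> events" unfolding x(1) Ev_alt by (rule Er_meas[OF x(2)])
    qed
    have p_range: "\<forall>x\<in>X. 0 \<le> p x \<and> p x \<le> 1" unfolding p_def by auto
    have pt: "\<forall>S. S \<subseteq> X \<longrightarrow> prob {\<omega>\<in>space M. Z \<omega> = S} = wt X p S"
    proof (intro allI impI)
      fix S assume SX: "S \<subseteq> X"
      define B where "B r = {E. \<forall>pr\<in>Pairs. (pr \<in> E) = ((r, pr) \<in> S)}" for r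
      have eq1: "{\<omega>\<in>space M. Z \<omega> = S} = (\<Inter>r\<in>{1..R}. Er r -` B r \<inter> space M)"
      proof (intro set_eqI iffI)
        fix \<omega> assume "\<omega> \<in> {\<omega>\<in>space M. Z \<omega> = S}"
        then show "\<omega> \<in> (\<Inter>r\<in>{1..R}. Er r -` B r \<inter> space M)"
          unfolding Z_def B_def X_def Ev_def by auto
      next
        fix \<omega> assume h: "\<omega> \<in> (\<Inter>r\<in>{1..R}. Er r -` B r \<inter> space M)"
        have "1 \<in> {1..R}" using Rpos by simp
        then have sp: "\<omega> \<in> space M" using h by blast
        have "Z \<omega> = S"
        proof (intro set_eqI iffI)
          fix x assume "x \<in> Z \<omega>"
          then show "x \<in> S" using h unfolding Z_def B_def X_def Ev_def by auto
        next
          fix x assume "x \<in> S"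
          then show "x \<in> Z \<omega>" using h SX sp unfolding Z_def B_def X_def Ev_def by auto
        qed
        then show "\<omega> \<in> {\<omega>\<in>space M. Z \<omega> = S}" using sp by simp
      qed
      have "prob (\<Inter>r\<in>{1..R}. Er r -` B r \<inter> space M) = (\<Prod>r\<in>{1..R}. prob (Er r -` B r \<inter> space M))"
        using Rpos by (intro indep_varsD[OF graphs_indep]) auto
      also have "\<dots> = (\<Prod>r\<in>{1..R}. \<Prod>pr\<in>Pairs. if (r, pr) \<in> S then p (r, pr) else 1 - p (r, pr))"
      proof (intro prod.cong refl)
        fix r assume r: "r \<in> {1..R}"
        have "Er r -` B r \<inter> space M = {\<omega>\<in>space M. \<forall>pr\<in>Pairs. (\<omega> \<in> Ev (r, pr)) = ((r, pr) \<in> S)}"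
          unfolding B_def Ev_def by auto
        also have "prob \<dots> = (\<Prod>pr\<in>Pairs. if (r, pr) \<in> S then prob (Ev (r, pr)) else 1 - prob (Ev (r, pr)))"
        proof -
          have "indep_events (\<lambda>pr. Ev (r, pr)) Pairs"
            using edges_indep r unfolding Pairs_def Ev_def by simp
          then show ?thesis by (rule indep_events_pattern[OF _ finPairs order_refl])
        qed
        finally show "prob (Er r -` B r \<inter> space M) = (\<Prod>pr\<in>Pairs. if (r, pr) \<in> S then p (r, pr) else 1 - p (r, pr))"
          unfolding p_def .
      qed
      also have "\<dots> = wt X p S"
        unfolding wt_def X_def by (simp add: prod.cartesian_product)
      finally show "prob {\<omega>\<in>space M. Z \<omega> = S} = wt X p S" using eq1 by simp
    qed
    have law: "prob {\<omega>\<in>space M. Z \<omega> \<in> A} = mu X p A" for A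
      unfolding Z_def by (rule law_mu[OF finX Ev_ev pt[unfolded Z_def]])
    have downU: "\<forall>i\<in>{1..N}. downc (U i)" unfolding downc_def U_def by blast
    have edge_sym: "((min i j, max i j) \<in> Er r \<omega>) = ((i, j) \<in> Er r \<omega>)"
      if "r \<in> {1..R}" "\<omega> \<in> space M" for r \<omega> i j
      using undirected that by (cases "i \<le> j") (auto simp: min_def max_def)
    have main_eq: "{\<omega>\<in>space M. \<forall>i\<in>{1..N}. \<exists>r\<in>{1..R}. \<forall>j\<in>nbrs (Er r \<omega>) i. y j = y i}
        = {\<omega>\<in>space M. Z \<omega> \<in> (\<Inter>i\<in>{1..N}. U i)}"
    proof -
      have loc: "(\<forall>j\<in>nbrs (Er r \<omega>) i. y j = y i) \<longleftrightarrow>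
          (\<forall>j\<in>{1..N}. y j \<noteq> y i \<longrightarrow> (r, (min i j, max i j)) \<notin> Z \<omega>)"
        if "\<omega> \<in> space M" "i \<in> {1..N}" "r \<in> {1..R}" for \<omega> i r
      proof -
        have zz: "(r, (min i j, max i j)) \<in> Z \<omega> \<longleftrightarrow> (i, j) \<in> Er r \<omega>"
          if "j \<in> {1..N}" "y j \<noteq> y i" for j
        proof -
          have "i \<noteq> j" using that by auto
          then have "(min i j, max i j) \<in> Pairs" using that \<open>i \<in> {1..N}\<close>
            unfolding Pairs_def by (auto simp: min_def max_def)
          then show ?thesis unfolding Z_def X_def Ev_def
            using edge_sym[OF \<open>r \<in> {1..R}\<close> \<open>\<omega> \<in> space M\<close>] \<open>r \<in> {1..R}\<close> \<open>\<omega> \<in> space M\<close> by auto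
        qed
        have nb: "j \<in> nbrs (Er r \<omega>) i \<Longrightarrow> j \<in> {1..N}" for j
          using on_nodes that unfolding nbrs_def by blast
        show ?thesis
        proof
          assume a: "\<forall>j\<in>nbrs (Er r \<omega>) i. y j = y i"
          show "\<forall>j\<in>{1..N}. y j \<noteq> y i \<longrightarrow> (r, (min i j, max i j)) \<notin> Z \<omega>"
            using a zz unfolding nbrs_def by auto
        next
          assume a: "\<forall>j\<in>{1..N}. y j \<noteq> y i \<longrightarrow> (r, (min i j, max i j)) \<notin> Z \<omega>"
          show "\<forall>j\<in>nbrs (Er r \<omega>) i. y j = y i"
            using a zz nb unfolding nbrs_def by blast
        qed
      qed
      show ?thesis
        unfolding U_def using loc by auto
    qed
    have node: "bound \<le> prob {\<omega>\<in>space M. Z \<omega> \<in> U i}" if i: "i \<in> {1..N}" for i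
    proof -
      define Jset where "Jset = {j\<in>{1..N}. y j \<noteq> y i}"
      define J where "J = (\<lambda>j. (min i j, max i j)) ` Jset"
      define c where "c = (1 - q) ^ (N - K)"
      have JP: "J \<subseteq> Pairs"
        unfolding J_def Jset_def Pairs_def using i by (auto simp: min_def max_def) (metis le_neq_implies_less)+
      have finJset: "finite Jset" unfolding Jset_def by simp
      have cardJset: "card Jset = N - K"
      proof -
        have yi: "y i \<in> {1..C}" using labels i by blast
        have Jeq: "Jset = {1..N} - {j\<in>{1..N}. y j = y i}" unfolding Jset_def by auto
        have sub: "{j\<in>{1..N}. y j = y i} \<subseteq> {1..N}" by auto
        have fin: "finite {j\<in>{1..N}. y j = y i}" by simp
        have "card Jset = card {1..N} - card {j\<in>{1..N}. y j = y i}"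
          unfolding Jeq by (rule card_Diff_subset[OF fin sub])
        also have "card {j\<in>{1..N}. y j = y i} = K" using balanced yi by blast
        finally show ?thesis by simp
      qed
      have cardJ: "card J \<le> N - K"
        unfolding J_def using card_image_le[OF finJset, of "\<lambda>j. (min i j, max i j)"] cardJset by simp
      define G where "G r = {\<omega>\<in>space M. \<forall>pr\<in>J. pr \<notin> Er r \<omega>}" for r
      have G_alt: "G r = Er r -` {E. \<forall>pr\<in>J. pr \<notin> E} \<inter> space M" for r
        unfolding G_def by auto
      have G_ev: "G r \<in> events" if "r \<in> {1..R}" for r
        unfolding G_alt by (rule Er_meas[OF that])
      have Gprob: "c \<le> prob (G r)" if r: "r \<in> {1..R}" for r
      proof -
        have "G r = {\<omega>\<in>space M. \<forall>pr\<in>J. (\<omega> \<in> Ev (r, pr)) = False}"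
          unfolding G_def Ev_def by auto
        also have "prob \<dots> = (\<Prod>pr\<in>J. 1 - prob (Ev (r, pr)))"
        proof -
          have "indep_events (\<lambda>pr. Ev (r, pr)) Pairs"
            using edges_indep r unfolding Pairs_def Ev_def by simp
          from indep_events_pattern[OF this finite_subset[OF JP finPairs] JP, of "\<lambda>_. False"]
          show ?thesis by simp
        qed
        also have "\<dots> \<ge> (\<Prod>pr\<in>J. 1 - q)"
        proof (intro prod_mono conjI)
          fix pr assume "pr \<in> J"
          then obtain j where j: "j \<in> {1..N}" "y j \<noteq> y i" and pr: "pr = (min i j, max i j)"
            unfolding J_def Jset_def by auto
          have "y (min i j) \<noteq> y (max i j)" using j by (auto simp: min_def max_def)
          moreover have "min i j \<in> {1..N}" "max i j \<in> {1..N}" using i j by (auto simp: min_def max_def)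
          ultimately have "prob {\<omega>\<in>space M. (min i j, max i j) \<in> Er r \<omega>} \<le> q"
            using inter_prob r by blast
          then show "1 - q \<le> 1 - prob (Ev (r, pr))" unfolding pr Ev_def by simp
          show "0 \<le> 1 - q" using q_range by simp
        qed
        also have "(\<Prod>pr\<in>J. 1 - q) = (1 - q) ^ card J" by simp
        also have "\<dots> \<ge> c" unfolding c_def using q_range cardJ by (intro power_decreasing) auto
        finally show ?thesis .
      qed
      define I0 where "I0 = (\<Inter>r\<in>{1..R}. Er r -` {E. \<exists>pr\<in>J. pr \<in> E} \<inter> space M)"
      have eqU: "{\<omega>\<in>space M. Z \<omega> \<in> U i} = space M - I0"
      proof -
        have loc: "(\<forall>j\<in>{1..N}. y j \<noteq> y i \<longrightarrow> (r, (min i j, max i j)) \<notin> Z \<omega>) \<longleftrightarrow> (\<forall>pr\<in>J. pr \<notin> Er r \<omega>)"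
          if "\<omega> \<in> space M" "r \<in> {1..R}" for \<omega> r
          using that JP unfolding Z_def X_def Ev_def J_def Jset_def by auto
        show ?thesis
        proof (intro set_eqI iffI)
          fix \<omega> assume "\<omega> \<in> {\<omega>\<in>space M. Z \<omega> \<in> U i}"
          then obtain r where r: "\<omega> \<in> space M" "r \<in> {1..R}"
              "\<forall>j\<in>{1..N}. y j \<noteq> y i \<longrightarrow> (r, (min i j, max i j)) \<notin> Z \<omega>"
            unfolding U_def by auto
          then have "\<forall>pr\<in>J. pr \<notin> Er r \<omega>" using loc by blast
          then show "\<omega> \<in> space M - I0" using r unfolding I0_def by auto
        next
          fix \<omega> assume "\<omega> \<in> space M - I0"
          then obtain r where r: "\<omega> \<in> space M" "r \<in> {1..R}" "\<forall>pr\<in>J. pr \<notin> Er r \<omega>"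
            unfolding I0_def using Rpos by auto
          then have "\<forall>j\<in>{1..N}. y j \<noteq> y i \<longrightarrow> (r, (min i j, max i j)) \<notin> Z \<omega>"
            using loc by blast
          then show "\<omega> \<in> {\<omega>\<in>space M. Z \<omega> \<in> U i}" using r unfolding U_def by auto
        qed
      qed
      have I0_ev: "I0 \<in> events" unfolding I0_def using Rpos by (intro sets.finite_INT Er_meas) auto
      have "prob I0 = (\<Prod>r\<in>{1..R}. prob (Er r -` {E. \<exists>pr\<in>J. pr \<in> E} \<inter> space M))"
        unfolding I0_def using Rpos by (intro indep_varsD[OF graphs_indep]) auto
      also have "\<dots> = (\<Prod>r\<in>{1..R}. 1 - prob (G r))"
      proof (intro prod.cong refl)
        fix r assume r: "r \<in> {1..R}"
        have "Er r -` {E. \<exists>pr\<in>J. pr \<in> E} \<inter> space M = space M - G r" unfolding G_def by auto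
        then show "prob (Er r -` {E. \<exists>pr\<in>J. pr \<in> E} \<inter> space M) = 1 - prob (G r)"
          using prob_compl[OF G_ev[OF r]] by simp
      qed
      also have "\<dots> \<le> (\<Prod>r\<in>{1..R}. 1 - c)"
        using Gprob by (intro prod_mono) auto
      also have "\<dots> = (1 - c) ^ R" by simp
      finally have "prob I0 \<le> (1 - c) ^ R" .
      moreover have "prob {\<omega>\<in>space M. Z \<omega> \<in> U i} = 1 - prob I0"
        unfolding eqU by (rule prob_compl[OF I0_ev])
      ultimately show ?thesis unfolding bound_def c_def by simp
    qed
    have bnd0: "0 \<le> bound"
    proof -
      have "0 \<le> (1 - q) ^ (N - K)" "(1 - q) ^ (N - K) \<le> 1" using q_range by (auto intro: power_le_one)
      then have "(1 - (1 - q) ^ (N - K)) ^ R \<le> 1" by (intro power_le_one) auto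
      then show ?thesis unfolding bound_def by simp
    qed
    have "bound ^ N = (\<Prod>i\<in>{1..N}. bound)" by simp
    also have "\<dots> \<le> (\<Prod>i\<in>{1..N}. mu X p (U i))"
      using node law bnd0 by (intro prod_mono) auto
    also have "\<dots> \<le> mu X p (\<Inter>i\<in>{1..N}. U i)"
      by (rule harris_prod[OF finX p_range _ downU]) simp
    also have "\<dots> = prob {\<omega>\<in>space M. \<forall>i\<in>{1..N}. \<exists>r\<in>{1..R}. \<forall>j\<in>nbrs (Er r \<omega>) i. y j = y i}"
      unfolding main_eq by (rule law[symmetric])
    finally show ?thesis unfolding NK bound_def by simp
  qed
qed
end
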